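(* Fix an integer horizon $T\ge 1$, constants $r_f>0$, $a\in\mathbb{R}$, $\sigma>0$, $\lambda>0$, $b\in\mathbb{R}$ and $w\in\mathbb{R}$, and set $\rho_t=r_f^{-(T-t)}$. Let $K\in\mathbb{R}$, $B>0$, $C>0$, and let $\pi^0$ be the feedback policy $$\pi^0_t(u;x,w)=\mathcal{N}\big(u\mid K(x-\rho_t w),\ \lambda B C^{T-t-1}\big),\qquad t=0,\dots,T-1.$$ Put $A=r_f^2+(a^2+\sigma^2)K^2+2r_f aK$, assume $CA\neq 1$, and define $$f(t)=\frac{\lambda B(a^2+\sigma^2)[1-(CA)^{T-t}]}{1-CA}-\frac{\lambda}{2}\ln(2\pi\lambda B)(T-t)-\frac{\lambda}{2}(T-t)-\frac{\lambda}{2}\ln C\sum_{i=0}^{T-t-1}i-(w-b)^2 .$$ Then the value function of $\pi^0$ is $$J^{\pi^0}(t,x;w)=A^{T-t}(x-\rho_t w)^2+f(t).$$ Define iteratively, for $k\ge 0$ and $t$ with $t+k+1\le T$: $\pi^{k+1}_t(\cdot;x,w)$ is the density $\pi$ on $\mathbb{R}$ minimizing $$\mathbb{E}\Big[J^{\pi^k}(t+1,r_f x+r_t u;w)+\lambda\int_{\mathbb{R}}\pi(v)\ln\pi(v)\,dv\Big],\quad u\sim\pi,$$ and $J^{\pi^{k+1}}(t,x;w)$ is the corresponding minimal value. Then for every $k\ge1$ and $t$ with $k\le T-t$, $$\pi_t^k(u;x,w)=\mathcal{N}\Big(u\ \Big|\ -\frac{a r_f(x-\rho_t w)}{a^2+\sigma^2},\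 \frac{\lambda}{2(a^2+\sigma^2)A^{T-t-k}}\Big(\frac{a^2+\sigma^2}{\sigma^2 r_f^2}\Big)^{k-1}\Big),$$ $$J^{\pi^k}(t,x;w)=A^{T-t-k}\Big(\frac{\sigma^2 r_f^2}{a^2+\sigma^2}\Big)^k(x-\rho_t w)^2+\frac{\lambda}{2}k\ln\Big(\frac{a^2+\sigma^2}{\pi\lambda}\Big)+\frac{\lambda}{2}\sum_{i=0}^{k-1}i\ln\Big(\frac{\sigma^2 r_f^2}{a^2+\sigma^2}\Big)+\frac{\lambda\ln A}{2}k(T-t-k)+f(t+k).$$
   Context: Market: risk-free (gross) return $r_f$ per period; the risky asset's excess return from period $t$ to $t+1$ is a random variable $r_t$, the $r_t$ ($t=0,\dots,T-1$) being independent, each with mean $a$ and variance $\sigma^2$. Wealth evolves as $x_{t+1}=r_f x_t+r_t u_t$, where under a feedback policy $\pi=(\pi_0,\dots,\pi_{T-1})$ the risky investment $u_t$ is drawn from the probability density $\pi_t(\cdot;x_t,w)$ on $\mathbb{R}$, independently of $r_t$ (and $r_t$ is independent of the history up to time $t$). The value function of a policy $\pi$ is $$J^{\pi}(t,x;w)=\mathbb{E}\Big[(x_T-w)^2+\lambda\sum_{s=t}^{T-1}\int_{\mathbb{R}}\pi_s(u)\ln\pi_s(u)\,du\ \Big|\ x_t=x\Big]-(w-b)^2,$$ so $J^{\pi}(T,x;w)=(x-w)^2-(w-b)^2$. $\mathcal{N}(u\mid m,v)$ denotes the Gaussian density with mean $m$ and variance $v$. The symbol $\pi$ without subscript or superscript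 inside logarithms denotes the number $3.14159\ldots$. *)

theory Defs
  imports "HOL-Probability.Probability"
begin

definition gauss :: "real \<Rightarrow> real \<Rightarrow> real \<Rightarrow> real" where
  "gauss m v u = normal_density m (sqrt v) u"

text \<open>Admissible probability densities on the real line (finite second moment,
  integrable p ln p; note ln 0 = 0 in Isabelle, matching 0 ln 0 = 0).\<close>
definition density_adm :: "(real \<Rightarrow> real) \<Rightarrow> bool" where
  "density_adm p \<longleftrightarrow> p \<in> borel_measurable borel \<and> (\<forall>u. 0 \<le> p u)
     \<and> integrable lborel p \<and> (\<integral>u. p u \<partial>lborel) = 1
     \<and> integrable lborel (\<lambda>u. p u * u\<^sup>2)
     \<and> integrable lborel (\<lambda>u. p u * ln (p u))"

text \<open>One-step cost at time t, state x: E[V(r_f x + r_t u) + lam * int p ln p], u ~ p,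
  r_t ~ R t independent of u.\<close>
definition stage_cost ::
  "(nat \<Rightarrow> real measure) \<Rightarrow> real \<Rightarrow> real \<Rightarrow> nat \<Rightarrow> real \<Rightarrow> (real \<Rightarrow> real) \<Rightarrow> (real \<Rightarrow> real) \<Rightarrow> real" where
  "stage_cost R rf lam t x V p =
     (\<integral>u. p u * (\<integral>r. V (rf * x + r * u) \<partial>R t) \<partial>lborel)
     + lam * (\<integral>u. p u * ln (p u) \<partial>lborel)"

text \<open>Value of a feedback policy pol (pol t x = density of u_t given x_t = x),
  by backward policy evaluation; argument n = number of remaining periods.\<close>
primrec polval_aux ::
  "(nat \<Rightarrow> real measure) \<Rightarrow> real \<Rightarrow> real \<Rightarrow> real \<Rightarrow> real \<Rightarrow> nat
    \<Rightarrow> (nat \<Rightarrow> real \<Rightarrow> real \<Rightarrow> real) \<Rightarrow> nat \<Rightarrow> real \<Rightarrow> real" where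
  "polval_aux R rf lam w b T pol 0 = (\<lambda>x. (x - w)\<^sup>2 - (w - b)\<^sup>2)"
| "polval_aux R rf lam w b T pol (Suc n) =
     (\<lambda>x. stage_cost R rf lam (T - Suc n) x (polval_aux R rf lam w b T pol n) (pol (T - Suc n) x))"

definition value_fun ::
  "(nat \<Rightarrow> real measure) \<Rightarrow> real \<Rightarrow> real \<Rightarrow> real \<Rightarrow> real \<Rightarrow> nat
    \<Rightarrow> (nat \<Rightarrow> real \<Rightarrow> real \<Rightarrow> real) \<Rightarrow> nat \<Rightarrow> real \<Rightarrow> real" where
  "value_fun R rf lam w b T pol t x = polval_aux R rf lam w b T pol (T - t) x"

definition rho :: "nat \<Rightarrow> real \<Rightarrow> nat \<Rightarrow> real" where
  "rho T rf t = inverse (rf ^ (T - t))"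

definition Acoef :: "real \<Rightarrow> real \<Rightarrow> real \<Rightarrow> real \<Rightarrow> real" where
  "Acoef rf a sg K = rf\<^sup>2 + (a\<^sup>2 + sg\<^sup>2) * K\<^sup>2 + 2 * rf * a * K"

definition fcoef ::
  "nat \<Rightarrow> real \<Rightarrow> real \<Rightarrow> real \<Rightarrow> real \<Rightarrow> real \<Rightarrow> real \<Rightarrow> real \<Rightarrow> real \<Rightarrow> real \<Rightarrow> nat \<Rightarrow> real" where
  "fcoef T rf a sg lam b w K B C t =
     (let A = Acoef rf a sg K in
      lam * B * (a\<^sup>2 + sg\<^sup>2) * (1 - (C * A) ^ (T - t)) / (1 - C * A)
      - lam / 2 * ln (2 * pi * lam * B) * real (T - t)
      - lam / 2 * real (T - t)
      - lam / 2 * ln C * (\<Sum>i<T - t. real i)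
      - (w - b)\<^sup>2)"

end

theory Submission
  imports Defs
begin

lemma gauss_facts:
  fixes m v :: real
  assumes v: "v > 0"
  shows "\<And>u. gauss m v u > 0"
    and "\<And>u. ln (gauss m v u) = - ln (2 * pi * v) / 2 - (u - m)\<^sup>2 / (2 * v)"
    and "integrable lborel (gauss m v)"
    and "(\<integral>u. gauss m v u \<partial>lborel) = 1"
    and "integrable lborel (\<lambda>u. gauss m v u * u)"
    and "(\<integral>u. gauss m v u * u \<partial>lborel) = m"
    and "integrable lborel (\<lambda>u. gauss m v u * u\<^sup>2)"
    and "(\<integral>u. gauss m v u * u\<^sup>2 \<partial>lborel) = v + m\<^sup>2"
    and "integrable lborel (\<lambda>u. gauss m v u * ln (gauss m v u))"
    and "(\<integral>u. gauss m v u * ln (gauss m v u) \<partial>lborel) = - ln (2 * pi * v) / 2 - 1 / 2"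
    and "density_adm (gauss m v)"
proof -
  define s where "s = sqrt v"
  have s: "s > 0" "s\<^sup>2 = v" using v by (auto simp: s_def)
  have g: "gauss m v = normal_density m s" by (auto simp: gauss_def s_def fun_eq_iff)
  show pos: "\<And>u. gauss m v u > 0" unfolding g using s by (simp add: normal_density_pos)
  show lng: "\<And>u. ln (gauss m v u) = - ln (2 * pi * v) / 2 - (u - m)\<^sup>2 / (2 * v)"
    unfolding g normal_density_def using s v
    by (simp add: ln_mult ln_div ln_sqrt) (simp add: field_simps)
  show i0: "integrable lborel (gauss m v)" unfolding g using s by simp
  show I0: "(\<integral>u. gauss m v u \<partial>lborel) = 1" unfolding g using s by simp
  show i1: "integrable lborel (\<lambda>u. gauss m v u * u)" unfolding g using s
    by (simp add: integrable_normal_moment_nz_1)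
  show I1: "(\<integral>u. gauss m v u * u \<partial>lborel) = m" unfolding g using s
    by (simp add: integral_normal_moment_nz_1)
  have i2c: "integrable lborel (\<lambda>u. gauss m v u * (u - m)^2)" unfolding g using s
    by (simp add: integrable_normal_moment)
  have I2c: "(\<integral>u. gauss m v u * (u - m)^2 \<partial>lborel) = v" unfolding g using s
    integral_normal_moment_even[of s m 1] by (simp add: fact_numeral)
  have e2: "(\<lambda>u. gauss m v u * u\<^sup>2) = (\<lambda>u. gauss m v u * (u - m)^2 + 2 * m * (gauss m v u * u) - m\<^sup>2 * gauss m v u)"
    by (auto simp: fun_eq_iff algebra_simps power2_eq_square)
  show i2: "integrable lborel (\<lambda>u. gauss m v u * u\<^sup>2)" unfolding e2
    using i0 i1 i2c by simp
  show "(\<integral>u. gauss m v u * u\<^sup>2 \<partial>lborel) = v + m\<^sup>2" unfolding e2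
    using i0 i1 i2c I0 I1 I2c by (simp add: power2_eq_square)
  have e3: "(\<lambda>u. gauss m v u * ln (gauss m v u)) = (\<lambda>u. (- ln (2 * pi * v) / 2) * gauss m v u - (1 / (2 * v)) * (gauss m v u * (u - m)^2))"
    by (auto simp: fun_eq_iff lng algebra_simps)
  show i3: "integrable lborel (\<lambda>u. gauss m v u * ln (gauss m v u))" unfolding e3
    using i0 i2c by simp
  show "(\<integral>u. gauss m v u * ln (gauss m v u) \<partial>lborel) = - ln (2 * pi * v) / 2 - 1 / 2"
    unfolding e3 using i0 i2c I0 I2c v by simp
  show "density_adm (gauss m v)" unfolding density_adm_def
    using i0 I0 i2 i3 pos by (auto simp: g less_imp_le)
qed

lemma R_moment:
  fixes M :: "real measure"
  assumes P: "prob_space M" and S: "sets M = sets borel" and i2: "integrable M (\<lambda>r. r\<^sup>2)"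
    and m1: "(\<integral>r. r \<partial>M) = a" and m2: "(\<integral>r. (r - a)\<^sup>2 \<partial>M) = s\<^sup>2"
  shows "integrable M (\<lambda>r. \<alpha> * (d + r * u)\<^sup>2 + \<beta>)"
    and "(\<integral>r. \<alpha> * (d + r * u)\<^sup>2 + \<beta> \<partial>M) = \<alpha> * (d\<^sup>2 + 2 * d * a * u + (a\<^sup>2 + s\<^sup>2) * u\<^sup>2) + \<beta>"
proof -
  interpret prob_space M by (rule P)
  have meas: "(\<lambda>r. r) \<in> borel_measurable M"
    using measurable_ident_sets[OF S] .
  have i1: "integrable M (\<lambda>r. r)"
    by (rule square_integrable_imp_integrable[OF meas]) (use i2 in simp)
  have ic: "\<And>c::real. integrable M (\<lambda>r. c)" by simp
  have Ic: "\<And>c::real. (\<integral>r. c \<partial>M) = c" by (simp add: prob_space)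
  have e: "(\<lambda>r. (r - a)\<^sup>2) = (\<lambda>r. r\<^sup>2 - 2 * a * r + a\<^sup>2)"
    by (auto simp: fun_eq_iff power2_eq_square algebra_simps)
  have "(\<integral>r. r\<^sup>2 - 2 * a * r + a\<^sup>2 \<partial>M) = s\<^sup>2" using m2 e by simp
  then have I2: "(\<integral>r. r\<^sup>2 \<partial>M) = a\<^sup>2 + s\<^sup>2" using i1 i2 m1
    by (simp add: power2_eq_square prob_space)
  have e2: "(\<lambda>r. \<alpha> * (d + r * u)\<^sup>2 + \<beta>) = (\<lambda>r. (\<alpha> * u\<^sup>2) * r\<^sup>2 + (2 * \<alpha> * d * u) * r + (\<alpha> * d\<^sup>2 + \<beta>))"
    by (auto simp: fun_eq_iff power2_eq_square algebra_simps)
  show "integrable M (\<lambda>r. \<alpha> * (d + r * u)\<^sup>2 + \<beta>)" unfolding e2 using i1 i2 by simp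
  show "(\<integral>r. \<alpha> * (d + r * u)\<^sup>2 + \<beta> \<partial>M) = \<alpha> * (d\<^sup>2 + 2 * d * a * u + (a\<^sup>2 + s\<^sup>2) * u\<^sup>2) + \<beta>"
    unfolding e2 using i1 i2 I2 m1 by (simp add: algebra_simps prob_space)
qed

lemma adm_int:
  assumes "density_adm q"
  shows "integrable lborel q" "integrable lborel (\<lambda>u. q u * u)" "integrable lborel (\<lambda>u. q u * u\<^sup>2)"
    "integrable lborel (\<lambda>u. q u * ln (q u))" "(\<integral>u. q u \<partial>lborel) = 1" "\<And>u. q u \<ge> 0"
    "q \<in> borel_measurable borel"
proof -
  show i0: "integrable lborel q" and i2: "integrable lborel (\<lambda>u. q u * u\<^sup>2)"
    and "integrable lborel (\<lambda>u. q u * ln (q u))" "(\<integral>u. q u \<partial>lborel) = 1" and nn: "\<And>u. q u \<ge> 0"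
    and m: "q \<in> borel_measurable borel"
    using assms by (auto simp: density_adm_def)
  show "integrable lborel (\<lambda>u. q u * u)"
  proof (rule Bochner_Integration.integrable_bound[where f="\<lambda>u. q u + q u * u\<^sup>2"])
    show "integrable lborel (\<lambda>u. q u + q u * u\<^sup>2)" using i0 i2 by simp
    show "(\<lambda>u. q u * u) \<in> borel_measurable lborel" using m by simp
    show "AE u in lborel. norm (q u * u) \<le> norm (q u + q u * u\<^sup>2)"
    proof (rule AE_I2)
      fix u :: real
      have "\<bar>u\<bar> \<le> 1 + u\<^sup>2"
      proof (cases "\<bar>u\<bar> \<le> 1")
        case True then show ?thesis using zero_le_power2[of u] by linarith
      next
        case False
        then have "\<bar>u\<bar> * 1 \<le> \<bar>u\<bar> * \<bar>u\<bar>" by (intro mult_left_mono) auto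
        then show ?thesis by (simp add: power2_eq_square abs_mult_self_eq)
      qed
      then have "q u * \<bar>u\<bar> \<le> q u * (1 + u\<^sup>2)" using nn[of u] by (intro mult_left_mono)
      then show "norm (q u * u) \<le> norm (q u + q u * u\<^sup>2)"
        using nn[of u] by (simp add: abs_mult algebra_simps)
    qed
  qed
qed


lemma stage_quad:
  assumes R: "prob_space (R t)" "sets (R t) = sets borel" "integrable (R t) (\<lambda>r. r\<^sup>2)"
    "(\<integral>r. r \<partial>R t) = a" "(\<integral>r. (r - a)\<^sup>2 \<partial>R t) = s\<^sup>2"
    and q: "density_adm q"
  shows "stage_cost R rf lam t x (\<lambda>y. \<alpha> * (y - c)\<^sup>2 + \<beta>) q
      = \<alpha> * (rf * x - c)\<^sup>2 + \<beta> + 2 * \<alpha> * (rf * x - c) * a * (\<integral>u. q u * u \<partial>lborel)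
        + \<alpha> * (a\<^sup>2 + s\<^sup>2) * (\<integral>u. q u * u\<^sup>2 \<partial>lborel) + lam * (\<integral>u. q u * ln (q u) \<partial>lborel)"
proof -
  define d where "d = rf * x - c"
  have inner: "(\<integral>r. \<alpha> * (rf * x + r * u - c)\<^sup>2 + \<beta> \<partial>R t)
      = \<alpha> * (d\<^sup>2 + 2 * d * a * u + (a\<^sup>2 + s\<^sup>2) * u\<^sup>2) + \<beta>" for u
  proof -
    have "(\<lambda>r. \<alpha> * (rf * x + r * u - c)\<^sup>2 + \<beta>) = (\<lambda>r. \<alpha> * (d + r * u)\<^sup>2 + \<beta>)"
      by (simp add: d_def algebra_simps)
    then show ?thesis using R_moment(2)[OF R, of \<alpha> d u \<beta>] by simp
  qed
  have e: "(\<lambda>u. q u * (\<integral>r. \<alpha> * (rf * x + r * u - c)\<^sup>2 + \<beta> \<partial>R t))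
      = (\<lambda>u. (\<alpha> * d\<^sup>2 + \<beta>) * q u + (2 * \<alpha> * d * a) * (q u * u) + (\<alpha> * (a\<^sup>2 + s\<^sup>2)) * (q u * u\<^sup>2))"
    by (simp only: inner) (auto simp: fun_eq_iff algebra_simps power2_eq_square)
  have I: "(\<integral>u. (\<alpha> * d\<^sup>2 + \<beta>) * q u + (2 * \<alpha> * d * a) * (q u * u) + (\<alpha> * (a\<^sup>2 + s\<^sup>2)) * (q u * u\<^sup>2) \<partial>lborel)
     = (\<alpha> * d\<^sup>2 + \<beta>) + (2 * \<alpha> * d * a) * (\<integral>u. q u * u \<partial>lborel) + (\<alpha> * (a\<^sup>2 + s\<^sup>2)) * (\<integral>u. q u * u\<^sup>2 \<partial>lborel)"
    using adm_int[OF q] by simp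
  show ?thesis
    unfolding stage_cost_def e I by (simp add: d_def)
qed


lemma KL:
  fixes p q :: "real \<Rightarrow> real"
  assumes pp: "\<And>u. p u > 0" and pi: "integrable lborel p" and p1: "(\<integral>u. p u \<partial>lborel) = 1"
    and q: "density_adm q" and iql: "integrable lborel (\<lambda>u. q u * ln (p u))"
  shows "(\<integral>u. q u * ln (q u) \<partial>lborel) - (\<integral>u. q u * ln (p u) \<partial>lborel) \<ge> 0"
    and "(\<integral>u. q u * ln (q u) \<partial>lborel) - (\<integral>u. q u * ln (p u) \<partial>lborel) = 0 \<Longrightarrow> AE u in lborel. q u = p u"
proof -
  note qi = adm_int[OF q]
  define h where "h u = p u - q u + q u * ln (q u) - q u * ln (p u)" for u
  have hi: "integrable lborel h" unfolding h_def[abs_def] using qi pi iql by simp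
  have hI: "(\<integral>u. h u \<partial>lborel) = (\<integral>u. q u * ln (q u) \<partial>lborel) - (\<integral>u. q u * ln (p u) \<partial>lborel)"
    unfolding h_def using qi pi iql p1 by simp
  have hnn: "h u \<ge> 0" for u
  proof (cases "q u = 0")
    case True then show ?thesis using pp[of u] by (simp add: h_def)
  next
    case False
    then have qp: "q u > 0" using qi(6)[of u] by simp
    have "ln (p u / q u) \<le> p u / q u - 1" using pp[of u] qp by (intro ln_le_minus_one) simp
    then have "q u * ln (p u / q u) \<le> q u * (p u / q u - 1)" using qp by (intro mult_left_mono) auto
    also have "\<dots> = p u - q u" using qp by (simp add: field_simps)
    finally show ?thesis using qp pp[of u] by (simp add: h_def ln_div algebra_simps)
  qed
  show "(\<integral>u. q u * ln (q u) \<partial>lborel) - (\<integral>u. q u * ln (p u) \<partial>lborel) \<ge> 0"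
    unfolding hI[symmetric] using hnn by (simp add: Bochner_Integration.integral_nonneg)
  assume "(\<integral>u. q u * ln (q u) \<partial>lborel) - (\<integral>u. q u * ln (p u) \<partial>lborel) = 0"
  then have "AE u in lborel. h u = 0"
    using integral_nonneg_eq_0_iff_AE[OF hi] hnn hI by simp
  then show "AE u in lborel. q u = p u"
  proof (rule AE_mp, intro AE_I2 impI)
    fix u assume h0: "h u = 0"
    show "q u = p u"
    proof (cases "q u = 0")
      case True then show ?thesis using h0 pp[of u] by (simp add: h_def)
    next
      case False
      then have qp: "q u > 0" using qi(6)[of u] by simp
      have e1: "q u * ln (p u) - q u * ln (q u) = p u - q u"
        using h0 by (simp add: h_def algebra_simps)
      have "q u * ln (p u / q u) = q u * ln (p u) - q u * ln (q u)"
        using qp pp[of u] by (simp add: ln_div right_diff_distrib)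
      also have "\<dots> = q u * (p u / q u - 1)" using e1 qp by (simp add: right_diff_distrib)
      finally have "q u * ln (p u / q u) = q u * (p u / q u - 1)" .
      then have "ln (p u / q u) = p u / q u - 1" using qp by simp
      then have "p u / q u = 1" using pp[of u] qp by (intro ln_eq_minus_one) auto
      then show ?thesis using qp by simp
    qed
  qed
qed


lemma min_step:
  assumes R: "prob_space (R t)" "sets (R t) = sets borel" "integrable (R t) (\<lambda>r. r\<^sup>2)"
    "(\<integral>r. r \<partial>R t) = a" "(\<integral>r. (r - a)\<^sup>2 \<partial>R t) = s\<^sup>2"
    and s: "s > 0" and al: "\<alpha> > 0" and lam: "lam > 0"
    and V: "V = (\<lambda>y. \<alpha> * (y - c)\<^sup>2 + \<beta>)"
    and p: "density_adm p"
    and pmin: "\<forall>q. density_adm q \<longrightarrow> stage_cost R rf lam t x V p \<le> stage_cost R rf lam t x V q"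
  shows "AE u in lborel. p u = gauss (- (a * (rf * x - c)) / (a\<^sup>2 + s\<^sup>2)) (lam / (2 * (a\<^sup>2 + s\<^sup>2) * \<alpha>)) u"
    and "stage_cost R rf lam t x V p
          = \<alpha> * (rf * x - c)\<^sup>2 * s\<^sup>2 / (a\<^sup>2 + s\<^sup>2) + \<beta> + lam / 2 * ln (\<alpha> * (a\<^sup>2 + s\<^sup>2) / (pi * lam))"
proof -
  define S where "S = a\<^sup>2 + s\<^sup>2"
  have S: "S > 0" using s by (simp add: S_def add_nonneg_pos)
  define d where "d = rf * x - c"
  define \<mu> where "\<mu> = - (a * d) / S"
  define v where "v = lam / (2 * S * \<alpha>)"
  have v: "v > 0" using S al lam by (simp add: v_def)
  define P where "P = gauss \<mu> v"
  note G = gauss_facts[OF v, of \<mu>, folded P_def]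
  define c0 where "c0 = \<alpha> * d\<^sup>2 * s\<^sup>2 / S + \<beta> - lam / 2 * ln (2 * pi * v)"
  have lv: "lam / (2 * v) = \<alpha> * S" using S al lam by (simp add: v_def field_simps)
  have muS: "\<mu> * S = - (a * d)" using S by (simp add: \<mu>_def)
  have key: "stage_cost R rf lam t x V q = c0 + lam * ((\<integral>u. q u * ln (q u) \<partial>lborel) - (\<integral>u. q u * ln (P u) \<partial>lborel))"
    and iql: "integrable lborel (\<lambda>u. q u * ln (P u))"
    if q: "density_adm q" for q
  proof -
    note qi = adm_int[OF q]
    have e: "(\<lambda>u. q u * ln (P u)) = (\<lambda>u. (- ln (2 * pi * v) / 2 - \<mu>\<^sup>2 / (2 * v)) * q u + (\<mu> / v) * (q u * u) - (1 / (2 * v)) * (q u * u\<^sup>2))"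
      using v by (auto simp: fun_eq_iff G(2) power2_eq_square field_simps)
    show "integrable lborel (\<lambda>u. q u * ln (P u))" unfolding e using qi by simp
    have L: "(\<integral>u. q u * ln (P u) \<partial>lborel) = (- ln (2 * pi * v) / 2 - \<mu>\<^sup>2 / (2 * v)) + (\<mu> / v) * (\<integral>u. q u * u \<partial>lborel) - (1 / (2 * v)) * (\<integral>u. q u * u\<^sup>2 \<partial>lborel)"
      unfolding e using qi by simp
    define E1 where "E1 = (\<integral>u. q u * u \<partial>lborel)"
    define E2 where "E2 = (\<integral>u. q u * u\<^sup>2 \<partial>lborel)"
    have sc: "stage_cost R rf lam t x V q = \<alpha> * d\<^sup>2 + \<beta> + 2 * \<alpha> * d * a * E1 + \<alpha> * S * E2 + lam * (\<integral>u. q u * ln (q u) \<partial>lborel)"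
      unfolding V stage_quad[where R=R and t=t and a=a and s=s, OF R q] by (simp add: d_def S_def E1_def E2_def)
    have l1: "lam * (\<mu>\<^sup>2 / (2 * v)) = \<alpha> * a\<^sup>2 * d\<^sup>2 / S"
    proof -
      have "lam * (\<mu>\<^sup>2 / (2 * v)) = (lam / (2 * v)) * \<mu>\<^sup>2" by simp
      also have "\<dots> = \<alpha> * (\<mu> * S) ^ 2 / S" unfolding lv using S by (simp add: power2_eq_square)
      finally show ?thesis unfolding muS by (simp add: power2_eq_square)
    qed
    have l2: "lam * (\<mu> / v) = - 2 * \<alpha> * a * d"
    proof -
      have "lam * (\<mu> / v) = 2 * (lam / (2 * v)) * \<mu>" by simp
      also have "\<dots> = 2 * \<alpha> * (\<mu> * S)" unfolding lv by simp
      finally show ?thesis unfolding muS by simp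
    qed
    have l3: "lam * (1 / (2 * v)) = \<alpha> * S" using lv by simp
    have dd: "\<alpha> * d\<^sup>2 = \<alpha> * d\<^sup>2 * s\<^sup>2 / S + \<alpha> * a\<^sup>2 * d\<^sup>2 / S" using S by (simp add: field_simps) (simp add: S_def algebra_simps)
    define H where "H = (\<integral>u. q u * ln (q u) \<partial>lborel)"
    have "c0 + lam * (H - (\<integral>u. q u * ln (P u) \<partial>lborel))
       = \<alpha> * d\<^sup>2 * s\<^sup>2 / S + \<beta> + lam * H + lam * (\<mu>\<^sup>2 / (2 * v)) - lam * (\<mu> / v) * E1 + lam * (1 / (2 * v)) * E2"
      unfolding c0_def L E1_def[symmetric] E2_def[symmetric] by (simp add: algebra_simps)
    also have "\<dots> = \<alpha> * d\<^sup>2 * s\<^sup>2 / S + \<beta> + lam * H + \<alpha> * a\<^sup>2 * d\<^sup>2 / S - (- 2 * \<alpha> * a * d) * E1 + (\<alpha> * S) * E2"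
      by (simp only: l1 l2 l3)
    also have "\<dots> = (\<alpha> * d\<^sup>2 * s\<^sup>2 / S + \<alpha> * a\<^sup>2 * d\<^sup>2 / S) + \<beta> + lam * H + 2 * \<alpha> * d * a * E1 + \<alpha> * S * E2"
      by (simp add: algebra_simps)
    also have "\<dots> = \<alpha> * d\<^sup>2 + \<beta> + lam * H + 2 * \<alpha> * d * a * E1 + \<alpha> * S * E2"
      by (simp only: dd[symmetric])
    also have "\<dots> = stage_cost R rf lam t x V q"
      unfolding sc H_def by (simp add: algebra_simps)
    finally show "stage_cost R rf lam t x V q = c0 + lam * ((\<integral>u. q u * ln (q u) \<partial>lborel) - (\<integral>u. q u * ln (P u) \<partial>lborel))"
      unfolding H_def by simp
  qed
  have scP: "stage_cost R rf lam t x V P = c0" using key[OF G(11)] by simp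
  have "stage_cost R rf lam t x V p \<le> c0" using pmin G(11) scP by auto
  then have le: "(\<integral>u. p u * ln (p u) \<partial>lborel) - (\<integral>u. p u * ln (P u) \<partial>lborel) \<le> 0"
    using key[OF p] lam by (simp add: mult_le_0_iff)
  have ge: "(\<integral>u. p u * ln (p u) \<partial>lborel) - (\<integral>u. p u * ln (P u) \<partial>lborel) \<ge> 0"
    by (rule KL(1)[OF G(1) G(3) G(4) p iql[OF p]])
  have z: "(\<integral>u. p u * ln (p u) \<partial>lborel) - (\<integral>u. p u * ln (P u) \<partial>lborel) = 0" using le ge by simp
  show "AE u in lborel. p u = gauss (- (a * (rf * x - c)) / (a\<^sup>2 + s\<^sup>2)) (lam / (2 * (a\<^sup>2 + s\<^sup>2) * \<alpha>)) u"
    using KL(2)[OF G(1) G(3) G(4) p iql[OF p] z] by (simp add: P_def \<mu>_def v_def d_def S_def)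
  have "ln (2 * pi * v) = - ln (\<alpha> * S / (pi * lam))"
  proof -
    have "2 * pi * v = (pi * lam) / (\<alpha> * S)" using S al lam by (simp add: v_def field_simps)
    moreover have "ln ((pi * lam) / (\<alpha> * S)) = ln (pi * lam) - ln (\<alpha> * S)"
      using S al lam by (intro ln_divide_pos) auto
    moreover have "ln ((\<alpha> * S) / (pi * lam)) = ln (\<alpha> * S) - ln (pi * lam)"
      using S al lam by (intro ln_divide_pos) auto
    ultimately show ?thesis by simp
  qed
  then show "stage_cost R rf lam t x V p
          = \<alpha> * (rf * x - c)\<^sup>2 * s\<^sup>2 / (a\<^sup>2 + s\<^sup>2) + \<beta> + lam / 2 * ln (\<alpha> * (a\<^sup>2 + s\<^sup>2) / (pi * lam))"
    using key[OF p] z by (simp add: c0_def d_def S_def)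
qed


lemma fcoef_step:
  assumes "Suc n \<le> T" and C: "C > 0" and lB: "lam * B > 0" and hCA: "C * A \<noteq> 1" and A: "A = Acoef rf a sg K"
  shows "fcoef T rf a sg lam b w K B C (T - Suc n)
       = fcoef T rf a sg lam b w K B C (T - n) + A ^ n * (a\<^sup>2 + sg\<^sup>2) * (lam * B * C ^ n)
         - lam / 2 * ln (2 * pi * (lam * B * C ^ n)) - lam / 2"
proof -
  have t1: "T - (T - Suc n) = Suc n" "T - (T - n) = n" using assms by auto
  have ln: "ln (2 * pi * (lam * B * C ^ n)) = ln (2 * pi * lam * B) + real n * ln C"
  proof -
    have "lam \<noteq> 0" "B \<noteq> 0" using lB by auto
    then show ?thesis using C lB by (simp add: ln_mult ln_realpow mult.assoc pi_gt_zero)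
  qed
  have g: "(1 - (C * A) ^ Suc n) / (1 - C * A) = (1 - (C * A) ^ n) / (1 - C * A) + (C * A) ^ n"
  proof -
    have "1 - C * A \<noteq> 0" using hCA by simp
    then show ?thesis by (simp add: field_simps)
  qed
  define S where "S = a\<^sup>2 + sg\<^sup>2"
  have g2: "lam * B * S * (1 - (C * A) ^ Suc n) / (1 - C * A) = lam * B * S * (1 - (C * A) ^ n) / (1 - C * A) + A ^ n * S * (lam * B * C ^ n)"
  proof -
    have "1 - C * A \<noteq> 0" using hCA by simp
    then show ?thesis by (simp add: field_simps power_mult_distrib)
  qed
  show ?thesis
    unfolding fcoef_def Let_def A[symmetric] t1 ln S_def[symmetric] g2
    by (simp add: algebra_simps add_divide_distrib)
qed


lemma part1:
  fixes T :: nat and rf a sg lam b w K B C :: real and R :: "nat \<Rightarrow> real measure"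
  assumes hrf: "rf > 0" and hlam: "lam > 0" and hB: "B > 0" and hC: "C > 0"
    and hCA: "C * Acoef rf a sg K \<noteq> 1"
    and hR: "\<forall>t<T. prob_space (R t) \<and> sets (R t) = sets borel
               \<and> integrable (R t) (\<lambda>r. r\<^sup>2)
               \<and> (\<integral>r. r \<partial>R t) = a \<and> (\<integral>r. (r - a)\<^sup>2 \<partial>R t) = sg\<^sup>2"
    and pi0: "pi0 = (\<lambda>t x u. gauss (K * (x - rho T rf t * w)) (lam * B * C ^ (T - t - 1)) u)"
  shows "n \<le> T \<Longrightarrow> polval_aux R rf lam w b T pi0 n x
     = (Acoef rf a sg K) ^ n * (x - rho T rf (T - n) * w)\<^sup>2 + fcoef T rf a sg lam b w K B C (T - n)"
proof (induction n arbitrary: x)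
  case 0
  then show ?case by (simp add: rho_def fcoef_def Let_def)
next
  case (Suc n)
  define A where "A = Acoef rf a sg K"
  define t where "t = T - Suc n"
  have tT: "t < T" using Suc.prems by (simp add: t_def)
  have Rt: "prob_space (R t)" "sets (R t) = sets borel" "integrable (R t) (\<lambda>r. r\<^sup>2)"
    "(\<integral>r. r \<partial>R t) = a" "(\<integral>r. (r - a)\<^sup>2 \<partial>R t) = sg\<^sup>2" using hR tT by auto
  define c where "c = rho T rf (T - n) * w"
  define f where "f = fcoef T rf a sg lam b w K B C (T - n)"
  define z where "z = x - rho T rf t * w"
  define v where "v = lam * B * C ^ n"
  have v: "v > 0" using hlam hB hC by (simp add: v_def)
  have Tt: "T - t - 1 = n" "T - Suc t = n" using Suc.prems by (auto simp: t_def)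
  have V: "polval_aux R rf lam w b T pi0 n = (\<lambda>y. A ^ n * (y - c)\<^sup>2 + f)"
    using Suc.IH Suc.prems by (auto simp: fun_eq_iff A_def c_def f_def)
  have pol: "pi0 t x = gauss (K * z) v" by (simp add: pi0 z_def v_def Tt)
  note G = gauss_facts[OF v, of "K * z"]
  have rfz: "rf * x - c = rf * z"
  proof -
    have "T - (T - n) = n" "T - t = Suc n" using Suc.prems by (auto simp: t_def)
    then show ?thesis using hrf by (simp add: c_def z_def rho_def field_simps)
  qed
  have "polval_aux R rf lam w b T pi0 (Suc n) x = stage_cost R rf lam t x (\<lambda>y. A ^ n * (y - c)\<^sup>2 + f) (gauss (K * z) v)"
    by (simp add: t_def[symmetric] V pol)
  also have "\<dots> = A ^ n * (rf * z)\<^sup>2 + f + 2 * A ^ n * (rf * z) * a * (K * z)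
        + A ^ n * (a\<^sup>2 + sg\<^sup>2) * (v + (K * z)\<^sup>2) + lam * (- ln (2 * pi * v) / 2 - 1 / 2)"
    unfolding stage_quad[where R=R and t=t and a=a and s=sg, OF Rt G(11)] G(6) G(8) G(10) rfz ..
  also have "\<dots> = A ^ Suc n * z\<^sup>2 + (f + A ^ n * (a\<^sup>2 + sg\<^sup>2) * v - lam / 2 * ln (2 * pi * v) - lam / 2)"
    by (simp add: A_def Acoef_def power2_eq_square algebra_simps)
  also have "f + A ^ n * (a\<^sup>2 + sg\<^sup>2) * v - lam / 2 * ln (2 * pi * v) - lam / 2 = fcoef T rf a sg lam b w K B C (T - Suc n)"
    unfolding f_def v_def
    by (rule fcoef_step[symmetric, OF Suc.prems hC _ hCA[folded A_def] A_def]) (use hlam hB in simp)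
  finally show ?case by (simp add: A_def z_def t_def)
qed


definition Fk :: "nat \<Rightarrow> real \<Rightarrow> real \<Rightarrow> real \<Rightarrow> real \<Rightarrow> real \<Rightarrow> real \<Rightarrow> real \<Rightarrow> real \<Rightarrow> real \<Rightarrow> nat \<Rightarrow> nat \<Rightarrow> real" where
  "Fk T rf a sg lam b w K B C k t =
     lam / 2 * real k * ln ((a\<^sup>2 + sg\<^sup>2) / (pi * lam))
   + lam / 2 * (\<Sum>i<k. real i * ln (sg\<^sup>2 * rf\<^sup>2 / (a\<^sup>2 + sg\<^sup>2)))
   + lam * ln (Acoef rf a sg K) / 2 * real k * real (T - t - k)
   + fcoef T rf a sg lam b w K B C (t + k)"

lemma Acoef_pos:
  assumes "rf > 0" "sg > 0" shows "Acoef rf a sg K > 0"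
proof -
  have "Acoef rf a sg K = (rf + a * K)\<^sup>2 + sg\<^sup>2 * K\<^sup>2"
    by (simp add: Acoef_def power2_eq_square algebra_simps)
  moreover have "(rf + a * K)\<^sup>2 + sg\<^sup>2 * K\<^sup>2 > 0"
  proof (cases "K = 0")
    case True then show ?thesis using assms by simp
  next
    case False then have "sg\<^sup>2 * K\<^sup>2 > 0" using assms by simp
    then show ?thesis by (simp add: add_nonneg_pos)
  qed
  ultimately show ?thesis by simp
qed

lemma step_lemma:
  fixes J :: "nat \<Rightarrow> nat \<Rightarrow> real \<Rightarrow> real" and p :: "real \<Rightarrow> real"
  assumes Rt: "prob_space (R t)" "sets (R t) = sets borel" "integrable (R t) (\<lambda>r. r\<^sup>2)"
    "(\<integral>r. r \<partial>R t) = a" "(\<integral>r. (r - a)\<^sup>2 \<partial>R t) = sg\<^sup>2"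
    and hrf: "rf > 0" and hsig: "sg > 0" and hlam: "lam > 0"
    and tk: "t + Suc k \<le> T"
    and IH: "\<And>y. J k (Suc t) y = Acoef rf a sg K ^ (T - Suc t - k) * (sg\<^sup>2 * rf\<^sup>2 / (a\<^sup>2 + sg\<^sup>2)) ^ k * (y - rho T rf (Suc t) * w)\<^sup>2
        + Fk T rf a sg lam b w K B C k (Suc t)"
    and p: "density_adm p"
    and pmin: "\<forall>q. density_adm q \<longrightarrow> stage_cost R rf lam t x (J k (Suc t)) p \<le> stage_cost R rf lam t x (J k (Suc t)) q"
    and Jeq: "J (Suc k) t x = stage_cost R rf lam t x (J k (Suc t)) p"
  shows "AE u in lborel. p u =
               gauss (- (a * rf * (x - rho T rf t * w)) / (a\<^sup>2 + sg\<^sup>2))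
                     (lam / (2 * (a\<^sup>2 + sg\<^sup>2) * Acoef rf a sg K ^ (T - t - Suc k))
                        * ((a\<^sup>2 + sg\<^sup>2) / (sg\<^sup>2 * rf\<^sup>2)) ^ (Suc k - 1)) u"
    and "J (Suc k) t x = Acoef rf a sg K ^ (T - t - Suc k) * (sg\<^sup>2 * rf\<^sup>2 / (a\<^sup>2 + sg\<^sup>2)) ^ Suc k * (x - rho T rf t * w)\<^sup>2
        + Fk T rf a sg lam b w K B C (Suc k) t"
proof -
  define A where "A = Acoef rf a sg K"
  have A: "A > 0" using Acoef_pos[OF hrf hsig] by (simp add: A_def)
  define S where "S = a\<^sup>2 + sg\<^sup>2"
  have S: "S > 0" using hsig by (simp add: S_def add_nonneg_pos)
  define Q where "Q = sg\<^sup>2 * rf\<^sup>2 / S"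
  have Q: "Q > 0" using S hsig hrf by (simp add: Q_def)
  define m where "m = T - t - Suc k"
  have m: "T - Suc t - k = m" "T - t - Suc k = m" "T - Suc (t + k) = m" using tk by (auto simp: m_def)
  define \<alpha> where "\<alpha> = A ^ m * Q ^ k"
  have al: "\<alpha> > 0" using A Q by (simp add: \<alpha>_def)
  define c where "c = rho T rf (Suc t) * w"
  define \<beta> where "\<beta> = Fk T rf a sg lam b w K B C k (Suc t)"
  define z where "z = x - rho T rf t * w"
  have V: "J k (Suc t) = (\<lambda>y. \<alpha> * (y - c)\<^sup>2 + \<beta>)"
    by (auto simp: fun_eq_iff IH \<alpha>_def c_def \<beta>_def A_def[symmetric] Q_def[symmetric] S_def[symmetric] m)
  have rfz: "rf * x - c = rf * z"
  proof -
    have "T - Suc t = m + k" "T - t = Suc (m + k)" using tk by (auto simp: m_def)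
    then show ?thesis using hrf by (simp add: c_def z_def rho_def field_simps)
  qed
  note MS = min_step[where R=R and t=t and a=a and s=sg, OF Rt hsig al hlam V p pmin]
  have var: "lam / (2 * S * \<alpha>) = lam / (2 * S * A ^ m) * (S / (sg\<^sup>2 * rf\<^sup>2)) ^ k"
  proof -
    have "(S / (sg\<^sup>2 * rf\<^sup>2)) ^ k = 1 / Q ^ k" using S hsig hrf
      by (simp add: Q_def power_divide)
    then show ?thesis by (simp add: \<alpha>_def)
  qed
  show "AE u in lborel. p u =
               gauss (- (a * rf * (x - rho T rf t * w)) / (a\<^sup>2 + sg\<^sup>2))
                     (lam / (2 * (a\<^sup>2 + sg\<^sup>2) * Acoef rf a sg K ^ (T - t - Suc k))
                        * ((a\<^sup>2 + sg\<^sup>2) / (sg\<^sup>2 * rf\<^sup>2)) ^ (Suc k - 1)) u"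
    using MS(1) unfolding rfz var[unfolded S_def] by (simp add: m A_def z_def mult.assoc)
  have lnal: "ln (\<alpha> * S / (pi * lam)) = real m * ln A + real k * ln Q + ln (S / (pi * lam))"
  proof -
    have e: "\<alpha> * S / (pi * lam) = A ^ m * (Q ^ k * (S / (pi * lam)))" by (simp add: \<alpha>_def)
    have l: "ln (A ^ m * (Q ^ k * (S / (pi * lam)))) = ln (A ^ m) + (ln (Q ^ k) + ln (S / (pi * lam)))"
    proof -
      have p1: "S / (pi * lam) > 0" using S hlam by (simp add: pi_gt_zero)
      have "ln (Q ^ k * (S / (pi * lam))) = ln (Q ^ k) + ln (S / (pi * lam))"
        by (rule ln_mult_pos) (use Q p1 in auto)
      moreover have "ln (A ^ m * (Q ^ k * (S / (pi * lam)))) = ln (A ^ m) + ln (Q ^ k * (S / (pi * lam)))"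
        by (rule ln_mult_pos) (use A Q p1 in \<open>auto intro: mult_pos_pos simp del: times_divide_eq_right\<close>)
      ultimately show ?thesis by simp
    qed
    show ?thesis unfolding e l using A Q by (simp add: ln_realpow)
  qed
  have "J (Suc k) t x = \<alpha> * (rf * z)\<^sup>2 * sg\<^sup>2 / S + (\<beta> + lam / 2 * ln (\<alpha> * S / (pi * lam)))"
    using MS(2) unfolding Jeq rfz S_def by (simp only: add.assoc)
  also have "\<alpha> * (rf * z)\<^sup>2 * sg\<^sup>2 / S = A ^ m * Q ^ Suc k * z\<^sup>2"
    by (simp add: \<alpha>_def Q_def power2_eq_square)
  also have "\<beta> + lam / 2 * ln (\<alpha> * S / (pi * lam)) = Fk T rf a sg lam b w K B C (Suc k) t"
    unfolding lnal \<beta>_def Fk_def A_def[symmetric] Q_def[symmetric] S_def[symmetric] m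
    by (simp add: algebra_simps add_divide_distrib)
  finally show "J (Suc k) t x = Acoef rf a sg K ^ (T - t - Suc k) * (sg\<^sup>2 * rf\<^sup>2 / (a\<^sup>2 + sg\<^sup>2)) ^ Suc k * (x - rho T rf t * w)\<^sup>2
        + Fk T rf a sg lam b w K B C (Suc k) t"
    by (simp add: m A_def[symmetric] Q_def[symmetric] S_def[symmetric] z_def)
qed

theorem theorem2:
  fixes T :: nat and rf a sg lam b w K B C :: real
    and R :: "nat \<Rightarrow> real measure"
    and Pol :: "nat \<Rightarrow> nat \<Rightarrow> real \<Rightarrow> real \<Rightarrow> real"
    and J :: "nat \<Rightarrow> nat \<Rightarrow> real \<Rightarrow> real"
  defines "A \<equiv> Acoef rf a sg K"
    and "pi0 \<equiv> (\<lambda>t x u. gauss (K * (x - rho T rf t * w)) (lam * B * C ^ (T - t - 1)) u)"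
  assumes hT: "T \<ge> 1" and hrf: "rf > 0" and hsig: "sg > 0" and hlam: "lam > 0"
    and hB: "B > 0" and hC: "C > 0" and hCA: "C * A \<noteq> 1"
    and hR: "\<forall>t<T. prob_space (R t) \<and> sets (R t) = sets borel
               \<and> integrable (R t) (\<lambda>r. r\<^sup>2)
               \<and> (\<integral>r. r \<partial>R t) = a \<and> (\<integral>r. (r - a)\<^sup>2 \<partial>R t) = sg\<^sup>2"
    and hJ0: "\<forall>t x. t \<le> T \<longrightarrow> J 0 t x = value_fun R rf lam w b T pi0 t x"
    and hstep: "\<forall>k t x. t + k + 1 \<le> T \<longrightarrow>
               density_adm (Pol (Suc k) t x)
             \<and> (\<forall>q. density_adm q \<longrightarrow>
                    stage_cost R rf lam t x (J k (Suc t)) (Pol (Suc k) t x)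
                      \<le> stage_cost R rf lam t x (J k (Suc t)) q)
             \<and> J (Suc k) t x = stage_cost R rf lam t x (J k (Suc t)) (Pol (Suc k) t x)"
  shows "(\<forall>t x. t \<le> T \<longrightarrow>
            value_fun R rf lam w b T pi0 t x
              = A ^ (T - t) * (x - rho T rf t * w)\<^sup>2 + fcoef T rf a sg lam b w K B C t)
       \<and> (\<forall>k t x. 1 \<le> k \<and> k \<le> T - t \<longrightarrow>
            (AE u in lborel. Pol k t x u =
               gauss (- (a * rf * (x - rho T rf t * w)) / (a\<^sup>2 + sg\<^sup>2))
                     (lam / (2 * (a\<^sup>2 + sg\<^sup>2) * A ^ (T - t - k))
                        * ((a\<^sup>2 + sg\<^sup>2) / (sg\<^sup>2 * rf\<^sup>2)) ^ (k - 1)) u)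
          \<and> J k t x = A ^ (T - t - k) * (sg\<^sup>2 * rf\<^sup>2 / (a\<^sup>2 + sg\<^sup>2)) ^ k * (x - rho T rf t * w)\<^sup>2
              + lam / 2 * real k * ln ((a\<^sup>2 + sg\<^sup>2) / (pi * lam))
              + lam / 2 * (\<Sum>i<k. real i * ln (sg\<^sup>2 * rf\<^sup>2 / (a\<^sup>2 + sg\<^sup>2)))
              + lam * ln A / 2 * real k * real (T - t - k)
              + fcoef T rf a sg lam b w K B C (t + k))"
proof -
  have Rt: "prob_space (R t)" "sets (R t) = sets borel" "integrable (R t) (\<lambda>r. r\<^sup>2)"
    "(\<integral>r. r \<partial>R t) = a" "(\<integral>r. (r - a)\<^sup>2 \<partial>R t) = sg\<^sup>2" if "t < T" for t
    using hR that by auto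
  have P1: "value_fun R rf lam w b T pi0 t x
              = A ^ (T - t) * (x - rho T rf t * w)\<^sup>2 + fcoef T rf a sg lam b w K B C t"
    if "t \<le> T" for t x
  proof -
    have "T - (T - t) = t" using that by simp
    then show ?thesis
      unfolding value_fun_def A_def
      using part1[OF hrf hlam hB hC hCA[unfolded A_def] hR pi0_def[THEN meta_eq_to_obj_eq], where n="T - t" and x=x]
      by simp
  qed
  define Q where "Q = sg\<^sup>2 * rf\<^sup>2 / (a\<^sup>2 + sg\<^sup>2)"
  have P2: "\<forall>t x. t + k \<le> T \<longrightarrow> J k t x = A ^ (T - t - k) * Q ^ k * (x - rho T rf t * w)\<^sup>2
        + Fk T rf a sg lam b w K B C k t" for k
  proof (induction k)
    case 0
    show ?case using hJ0 P1 by (simp add: Fk_def)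
  next
    case (Suc k)
    show ?case
    proof (intro allI impI)
      fix t x assume tk: "t + Suc k \<le> T"
      have tT: "t < T" using tk by simp
      have IH: "\<And>y. J k (Suc t) y = Acoef rf a sg K ^ (T - Suc t - k) * (sg\<^sup>2 * rf\<^sup>2 / (a\<^sup>2 + sg\<^sup>2)) ^ k * (y - rho T rf (Suc t) * w)\<^sup>2
        + Fk T rf a sg lam b w K B C k (Suc t)"
        using Suc.IH tk by (simp add: A_def Q_def)
      have hs: "density_adm (Pol (Suc k) t x)"
        "\<forall>q. density_adm q \<longrightarrow> stage_cost R rf lam t x (J k (Suc t)) (Pol (Suc k) t x) \<le> stage_cost R rf lam t x (J k (Suc t)) q"
        "J (Suc k) t x = stage_cost R rf lam t x (J k (Suc t)) (Pol (Suc k) t x)"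
        using hstep tk by auto
      show "J (Suc k) t x = A ^ (T - t - Suc k) * Q ^ Suc k * (x - rho T rf t * w)\<^sup>2
        + Fk T rf a sg lam b w K B C (Suc k) t"
        using step_lemma(2)[OF Rt[OF tT] hrf hsig hlam tk IH hs] by (simp add: A_def Q_def)
    qed
  qed
  show ?thesis
  proof (intro conjI allI impI)
    fix t x assume "t \<le> T" then show "value_fun R rf lam w b T pi0 t x
              = A ^ (T - t) * (x - rho T rf t * w)\<^sup>2 + fcoef T rf a sg lam b w K B C t" by (rule P1)
  next
    fix k t x assume kt: "1 \<le> k \<and> k \<le> T - t"
    then obtain k' where k': "k = Suc k'" by (cases k) auto
    have tk: "t + Suc k' \<le> T" using kt k' by simp
    have tT: "t < T" using tk by simp
    have IH: "\<And>y. J k' (Suc t) y = Acoef rf a sg K ^ (T - Suc t - k') * (sg\<^sup>2 * rf\<^sup>2 / (a\<^sup>2 + sg\<^sup>2)) ^ k' * (y - rho T rf (Suc t) * w)\<^sup>2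
        + Fk T rf a sg lam b w K B C k' (Suc t)"
      using P2[of k'] tk by (simp add: A_def Q_def)
    have hs: "density_adm (Pol (Suc k') t x)"
        "\<forall>q. density_adm q \<longrightarrow> stage_cost R rf lam t x (J k' (Suc t)) (Pol (Suc k') t x) \<le> stage_cost R rf lam t x (J k' (Suc t)) q"
        "J (Suc k') t x = stage_cost R rf lam t x (J k' (Suc t)) (Pol (Suc k') t x)"
      using hstep tk by auto
    note SL = step_lemma[OF Rt[OF tT] hrf hsig hlam tk IH hs]
    show "AE u in lborel. Pol k t x u =
               gauss (- (a * rf * (x - rho T rf t * w)) / (a\<^sup>2 + sg\<^sup>2))
                     (lam / (2 * (a\<^sup>2 + sg\<^sup>2) * A ^ (T - t - k))
                        * ((a\<^sup>2 + sg\<^sup>2) / (sg\<^sup>2 * rf\<^sup>2)) ^ (k - 1)) u"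
      using SL(1) unfolding k' A_def .
    show "J k t x = A ^ (T - t - k) * (sg\<^sup>2 * rf\<^sup>2 / (a\<^sup>2 + sg\<^sup>2)) ^ k * (x - rho T rf t * w)\<^sup>2
              + lam / 2 * real k * ln ((a\<^sup>2 + sg\<^sup>2) / (pi * lam))
              + lam / 2 * (\<Sum>i<k. real i * ln (sg\<^sup>2 * rf\<^sup>2 / (a\<^sup>2 + sg\<^sup>2)))
              + lam * ln A / 2 * real k * real (T - t - k)
              + fcoef T rf a sg lam b w K B C (t + k)"
      using SL(2) unfolding k' A_def Fk_def by (simp only: add.assoc)
  qed
qed

end
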